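(* Let $n\ge 2$ and let $S$ be an admissible peak set in $S^B_n$. Then \[ \min\{d_H(\sigma,\rho) : \sigma,\rho\in P^B(S;n),\ \sigma\neq\rho\} =\min\{d_\ell(\sigma,\rho) : \sigma,\rho\in P^B(S;n),\ \sigma\neq\rho\} =\min\{d_W(\sigma,\rho) : \sigma,\rho\in P^B(S;n),\ \sigma\neq\rho\}=1. \]
   Context: $S^B_n$ is the set of bijections $\sigma$ of $\{-n,\dots,-1,1,\dots,n\}$ with $\sigma(-i)=-\sigma(i)$ for all $i$, with multiplication given by composition; a signed permutation is written in one-line notation $\sigma(1)\cdots\sigma(n)$. A signed permutation $\sigma$ has a peak at index $i\in\{2,\dots,n-1\}$ if $\sigma(i-1)<\sigma(i)>\sigma(i+1)$ (usual order on integers). $Peak(\sigma)$ is the set of indices where $\sigma$ has a peak, and for $S\subseteq[n]$, $P^B(S;n)=\{\sigma\in S^B_n : Peak(\sigma)=S\}$. $S$ is an admissible peak set if $P^B(S;n)\neq\emptyset$ (equivalently, $S\subseteq\{2,\dots,n-1\}$ and $S$ contains no two consecutive integers). For $\sigma,\rho\in S^B_n$: $d_H(\sigma,\rho)=|\{i\in[n] : \sigma(i)\neq\rho(i)\}|$; $d_\ell(\sigma,\rho)=\max\{|\sigma(i)-\rho(i)| : i\in[n]\}$; $d_W(\sigma,\rho)=\ell_B(\rho^{-1}\sigma)$, where $\ell_B(\gamma)$ is the minimum number of factors in an expression of $\gamma$ as a product of the Coxeter generators $s_0^B,\dots,s_{n-1}^B$; here $s_0^B$ swaps $1$ and $-1$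 and fixes all other values, and for $1\le i<n$, $s_i^B$ swaps $i$ with $i+1$ and $-i$ with $-(i+1)$, fixing everything else. *)

theory Defs
  imports Main
begin

text \<open>Signed permutations of {-n..-1,1..n}, represented as functions int => int
  that are bijections of that set, odd (sigma(-i) = -sigma(i)), and the identity
  outside it (so that each signed permutation has a unique representative).\<close>

definition signedset :: "nat \<Rightarrow> int set" where
  "signedset n = {i. 1 \<le> \<bar>i\<bar> \<and> \<bar>i\<bar> \<le> int n}"

definition signed_perms :: "nat \<Rightarrow> (int \<Rightarrow> int) set" where
  "signed_perms n = {\<sigma>. bij_betw \<sigma> (signedset n) (signedset n)
      \<and> (\<forall>i. \<sigma> (-i) = - \<sigma> i)
      \<and> (\<forall>i. i \<notin> signedset n \<longrightarrow> \<sigma> i = i)}"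

definition peak_set :: "nat \<Rightarrow> (int \<Rightarrow> int) \<Rightarrow> int set" where
  "peak_set n \<sigma> = {i. 2 \<le> i \<and> i \<le> int n - 1 \<and> \<sigma> (i - 1) < \<sigma> i \<and> \<sigma> i > \<sigma> (i + 1)}"

definition PB :: "int set \<Rightarrow> nat \<Rightarrow> (int \<Rightarrow> int) set" where
  "PB S n = {\<sigma> \<in> signed_perms n. peak_set n \<sigma> = S}"

definition admissible_peak_set :: "int set \<Rightarrow> nat \<Rightarrow> bool" where
  "admissible_peak_set S n \<longleftrightarrow> PB S n \<noteq> {}"

definition d_H :: "nat \<Rightarrow> (int \<Rightarrow> int) \<Rightarrow> (int \<Rightarrow> int) \<Rightarrow> nat" where
  "d_H n \<sigma> \<rho> = card {i \<in> {1..int n}. \<sigma> i \<noteq> \<rho> i}"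

definition d_l :: "nat \<Rightarrow> (int \<Rightarrow> int) \<Rightarrow> (int \<Rightarrow> int) \<Rightarrow> int" where
  "d_l n \<sigma> \<rho> = Max ((\<lambda>i. \<bar>\<sigma> i - \<rho> i\<bar>) ` {1..int n})"

definition sB :: "nat \<Rightarrow> int \<Rightarrow> int" where
  "sB i = (if i = 0 then (\<lambda>x. if x = 1 then -1 else if x = -1 then 1 else x)
           else (\<lambda>x. if x = int i then int i + 1 else if x = int i + 1 then int i
                 else if x = - int i then -(int i + 1) else if x = -(int i + 1) then - int i
                 else x))"

definition lengthB :: "nat \<Rightarrow> (int \<Rightarrow> int) \<Rightarrow> nat" where
  "lengthB n \<gamma> = (LEAST k. \<exists>ws. length ws = k \<and> set ws \<subseteq> {0..<n}
                       \<and> \<gamma> = foldr (\<lambda>i f. sB i \<circ> f) ws id)"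

definition d_W :: "nat \<Rightarrow> (int \<Rightarrow> int) \<Rightarrow> (int \<Rightarrow> int) \<Rightarrow> nat" where
  "d_W n \<sigma> \<rho> = lengthB n (inv \<rho> \<circ> \<sigma>)"

end

theory Submission
  imports Defs
begin

definition wd :: "nat list \<Rightarrow> int \<Rightarrow> int" where
  "wd ws = foldr (\<lambda>i f. sB i \<circ> f) ws id"

lemma wd_Nil[simp]: "wd [] = id" by (simp add: wd_def)
lemma wd_Cons[simp]: "wd (i # ws) = sB i \<circ> wd ws" by (simp add: wd_def)
lemma wd_append: "wd (xs @ ys) = wd xs \<circ> wd ys"
  by (induction xs) auto

lemma sB_invol: "sB i \<circ> sB i = id"
  by (rule ext) (auto simp: sB_def)

lemma wd_rev_inv: "wd (rev ws) \<circ> wd ws = id"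
proof (induction ws)
  case (Cons a ws)
  have "wd (rev (a # ws)) \<circ> wd (a # ws) = wd (rev ws) \<circ> (sB a \<circ> sB a) \<circ> wd ws"
    by (simp add: wd_append o_assoc)
  also have "\<dots> = id" by (simp only: sB_invol comp_id Cons.IH)
  finally show ?case .
qed simp

lemma wd_inv: "wd ws \<circ> wd (rev ws) = id"
  using wd_rev_inv[of "rev ws"] by simp

lemma sB_sp: assumes "i < m" shows "sB i \<in> signed_perms m"
proof -
  have img: "sB i x \<in> signedset m" if "x \<in> signedset m" for x
    using that assms by (auto simp: sB_def signedset_def)
  have "bij_betw (sB i) (signedset m) (signedset m)"
    by (rule bij_betw_byWitness[where f'="sB i"]) (auto simp: img pointfree_idE[OF sB_invol])
  moreover have "\<forall>x. sB i (-x) = - sB i x" by (auto simp: sB_def)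
  moreover have "\<forall>x. x \<notin> signedset m \<longrightarrow> sB i x = x"
    using assms by (auto simp: sB_def signedset_def)
  ultimately show ?thesis by (simp add: signed_perms_def)
qed

lemma sp_comp: assumes "f \<in> signed_perms m" "g \<in> signed_perms m" shows "f \<circ> g \<in> signed_perms m"
  using assms unfolding signed_perms_def by (auto intro: bij_betw_trans)

lemma wd_sp: "set ws \<subseteq> {0..<m} \<Longrightarrow> wd ws \<in> signed_perms m"
proof (induction ws)
  case Nil
  show ?case by (simp add: signed_perms_def bij_betw_def)
next
  case (Cons a ws)
  have "a < m" using Cons.prems by auto
  then show ?case unfolding wd_Cons using Cons by (intro sp_comp[OF sB_sp]) auto
qed

lemma up: "1 \<le> k \<Longrightarrow> k \<le> m \<Longrightarrow> \<exists>ws. set ws \<subseteq> {0..<m} \<and> wd ws (int k) = int m"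
proof (induction "m - k" arbitrary: k)
  case 0 then show ?case by (intro exI[of _ "[]"]) auto
next
  case (Suc d)
  have dk: "d = m - Suc k" "k < m" using Suc.hyps(2) by arith+
  then obtain ws where ws: "set ws \<subseteq> {0..<m}" "wd ws (int (Suc k)) = int m"
    using Suc.hyps(1)[of "Suc k"] by auto
  have "sB k (int k) = int (Suc k)" using Suc.prems by (simp add: sB_def)
  then show ?case using ws Suc by (intro exI[of _ "ws @ [k]"]) (auto simp: wd_append)
qed

lemma down: "1 \<le> k \<Longrightarrow> k \<le> m \<Longrightarrow> \<exists>ws. set ws \<subseteq> {0..<m} \<and> wd ws (- int k) = 1"
proof (induction k)
  case 0 then show ?case by simp
next
  case (Suc k)
  show ?case
  proof (cases "k = 0")
    case True
    then show ?thesis using Suc by (intro exI[of _ "[0]"]) (auto simp: sB_def)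
  next
    case False
    then obtain ws where ws: "set ws \<subseteq> {0..<m}" "wd ws (- int k) = 1" using Suc by auto
    have "sB k (- int (Suc k)) = - int k" using False by (simp add: sB_def)
    then show ?thesis using ws Suc by (intro exI[of _ "ws @ [k]"]) (auto simp: wd_append)
  qed
qed

lemma move: "a \<in> signedset m \<Longrightarrow> \<exists>ws. set ws \<subseteq> {0..<m} \<and> wd ws a = int m"
proof -
  assume a: "a \<in> signedset m"
  show ?thesis
  proof (cases "a > 0")
    case True
    then show ?thesis using up[of "nat a" m] a by (auto simp: signedset_def)
  next
    case False
    have k: "1 \<le> nat (-a)" "nat(-a) \<le> m" "- int (nat (-a)) = a" using a False by (auto simp: signedset_def)
    obtain ws1 where w1: "set ws1 \<subseteq> {0..<m}" "wd ws1 a = 1"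
      using down[OF k(1) k(2)] unfolding k(3) by blast
    obtain ws2 where w2: "set ws2 \<subseteq> {0..<m}" "wd ws2 (int 1) = int m"
      using up[of 1 m] a by (auto simp: signedset_def)
    show ?thesis using w1 w2 False by (intro exI[of _ "ws2 @ ws1"]) (auto simp: wd_append)
  qed
qed

lemma signedset_Suc: "signedset n = signedset (Suc n) - {int (Suc n), - int (Suc n)}"
  by (auto simp: signedset_def)

lemma generation: "\<gamma> \<in> signed_perms n \<Longrightarrow> \<exists>ws. set ws \<subseteq> {0..<n} \<and> \<gamma> = wd ws"
proof (induction n arbitrary: \<gamma>)
  case 0
  then have "\<gamma> = id" by (auto simp: signed_perms_def signedset_def)
  then show ?case by (intro exI[of _ "[]"]) auto
next
  case (Suc n)
  let ?N = "int (Suc n)"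
  have N: "?N \<in> signedset (Suc n)" by (simp add: signedset_def)
  have g: "bij_betw \<gamma> (signedset (Suc n)) (signedset (Suc n))" "\<forall>i. \<gamma> (-i) = - \<gamma> i"
     "\<forall>i. i \<notin> signedset (Suc n) \<longrightarrow> \<gamma> i = i"
    using Suc.prems by (auto simp: signed_perms_def)
  have "\<gamma> ?N \<in> signedset (Suc n)" using g(1) N by (auto simp: bij_betw_def)
  then obtain ws where ws: "set ws \<subseteq> {0..<Suc n}" "wd ws (\<gamma> ?N) = ?N" using move by blast
  define g' where "g' = wd ws \<circ> \<gamma>"
  have g'sp: "g' \<in> signed_perms (Suc n)" unfolding g'_def by (rule sp_comp[OF wd_sp[OF ws(1)] Suc.prems])
  have g'N: "g' ?N = ?N" using ws by (simp add: g'_def)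
  have gb: "bij_betw g' (signedset (Suc n)) (signedset (Suc n))" "\<forall>i. g' (-i) = - g' i"
     "\<forall>i. i \<notin> signedset (Suc n) \<longrightarrow> g' i = i"
    using g'sp by (auto simp: signed_perms_def)
  have "g' (- ?N) = - g' ?N" using gb(2) by blast
  then have g'N2: "g' (- ?N) = - ?N" using g'N by simp
  have sub: "{?N, - ?N} \<subseteq> signedset (Suc n)" by (simp add: signedset_def)
  have im: "g' ` {?N, - ?N} = {?N, - ?N}" using g'N g'N2 by simp
  have "bij_betw g' {?N, - ?N} {?N, - ?N}"
    by (rule bij_betw_subset[OF gb(1) sub im])
  then have "bij_betw g' (signedset (Suc n) - {?N, - ?N}) (signedset (Suc n) - {?N, - ?N})"
    by (rule bij_betw_DiffI[OF gb(1) _ sub sub])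
  then have "bij_betw g' (signedset n) (signedset n)"
    by (simp only: signedset_Suc[symmetric])
  moreover have "\<forall>i. i \<notin> signedset n \<longrightarrow> g' i = i"
  proof (intro allI impI)
    fix i assume "i \<notin> signedset n"
    then have "i \<notin> signedset (Suc n) \<or> i = ?N \<or> i = - ?N" by (auto simp: signedset_def)
    then show "g' i = i" using gb(3) g'N g'N2 by auto
  qed
  ultimately have "g' \<in> signed_perms n" using gb(2) by (simp add: signed_perms_def)
  then obtain ws' where ws': "set ws' \<subseteq> {0..<n}" "g' = wd ws'" using Suc.IH by blast
  have "\<gamma> = wd (rev ws) \<circ> g'" unfolding g'_def by (simp only: o_assoc wd_rev_inv id_o)
  also have "\<dots> = wd (rev ws @ ws')" by (simp add: wd_append ws')
  finally show ?case using ws ws' by (intro exI[of _ "rev ws @ ws'"]) auto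
qed

lemma sp_facts:
  assumes "\<sigma> \<in> signed_perms n"
  shows "bij_betw \<sigma> (signedset n) (signedset n)" "\<And>i. \<sigma> (-i) = - \<sigma> i"
    "\<And>i. i \<notin> signedset n \<Longrightarrow> \<sigma> i = i"
  using assms by (auto simp: signed_perms_def)

lemma sp_neq: "\<sigma> \<in> signed_perms n \<Longrightarrow> x \<in> signedset n \<Longrightarrow> y \<in> signedset n \<Longrightarrow> x \<noteq> y \<Longrightarrow> \<sigma> x \<noteq> \<sigma> y"
  using sp_facts(1) by (metis bij_betw_def inj_onD)

lemma fin_sp: "finite (signed_perms n)"
proof -
  let ?A = "signedset n"
  let ?h = "\<lambda>f x. if x \<in> ?A then f x else (0::int)"
  have finA: "finite ?A"
    by (rule finite_subset[of _ "{- int n..int n}"]) (auto simp: signedset_def)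
  have "inj_on ?h (signed_perms n)"
  proof (rule inj_onI)
    fix f g assume f: "f \<in> signed_perms n" and g: "g \<in> signed_perms n" and e: "?h f = ?h g"
    show "f = g"
    proof
      fix x show "f x = g x"
        using fun_cong[OF e, of x] sp_facts(3)[OF f, of x] sp_facts(3)[OF g, of x]
        by (auto split: if_splits)
    qed
  qed
  moreover have "?h ` signed_perms n \<subseteq> {f. \<forall>x. (x \<in> ?A \<longrightarrow> f x \<in> ?A) \<and> (x \<notin> ?A \<longrightarrow> f x = 0)}"
    using sp_facts(1) by (fastforce simp: bij_betw_def)
  then have "finite (?h ` signed_perms n)"
    by (rule finite_subset) (rule finite_set_of_finite_funs[OF finA finA])
  ultimately show ?thesis using finite_imageD by blast
qed

lemma exists_pos_diff:
  assumes "\<sigma> \<in> signed_perms n" "\<rho> \<in> signed_perms n" "\<sigma> \<noteq> \<rho>"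
  shows "\<exists>i\<in>{1..int n}. \<sigma> i \<noteq> \<rho> i"
proof -
  obtain x where x: "\<sigma> x \<noteq> \<rho> x" using assms(3) by blast
  then have xs: "x \<in> signedset n" using sp_facts(3)[OF assms(1)] sp_facts(3)[OF assms(2)] by metis
  show ?thesis
  proof (cases "x > 0")
    case True then show ?thesis using x xs by (auto simp: signedset_def)
  next
    case False
    have "\<sigma> (-x) \<noteq> \<rho> (-x)" using x sp_facts(2)[OF assms(1)] sp_facts(2)[OF assms(2)] by simp
    then show ?thesis using False xs by (intro bexI[of _ "-x"]) (auto simp: signedset_def)
  qed
qed

lemma dH_ge: "\<sigma> \<in> signed_perms n \<Longrightarrow> \<rho> \<in> signed_perms n \<Longrightarrow> \<sigma> \<noteq> \<rho> \<Longrightarrow> 1 \<le> d_H n \<sigma> \<rho>"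
  using exists_pos_diff[of \<sigma> n \<rho>] unfolding d_H_def
  by (metis (mono_tags, lifting) One_nat_def Suc_leI card_gt_0_iff empty_iff finite_atLeastAtMost_int
      finite_subset mem_Collect_eq subsetI)

lemma dl_ge: "\<sigma> \<in> signed_perms n \<Longrightarrow> \<rho> \<in> signed_perms n \<Longrightarrow> \<sigma> \<noteq> \<rho> \<Longrightarrow> 1 \<le> d_l n \<sigma> \<rho>"
proof -
  assume a: "\<sigma> \<in> signed_perms n" "\<rho> \<in> signed_perms n" "\<sigma> \<noteq> \<rho>"
  obtain i where i: "i \<in> {1..int n}" "\<sigma> i \<noteq> \<rho> i" using exists_pos_diff[OF a] by blast
  have "\<bar>\<sigma> i - \<rho> i\<bar> \<le> d_l n \<sigma> \<rho>" unfolding d_l_def using i by (intro Max_ge) auto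
  then show ?thesis using i by linarith
qed

lemma inv_wd: "inv (wd b) = wd (rev b)"
  by (rule inv_unique_comp[OF wd_inv wd_rev_inv])

lemma lengthB_alt: "lengthB n \<gamma> = (LEAST k. \<exists>ws. length ws = k \<and> set ws \<subseteq> {0..<n} \<and> \<gamma> = wd ws)"
  unfolding lengthB_def wd_def ..

lemma dW_ge: "\<sigma> \<in> signed_perms n \<Longrightarrow> \<rho> \<in> signed_perms n \<Longrightarrow> \<sigma> \<noteq> \<rho> \<Longrightarrow> 1 \<le> d_W n \<sigma> \<rho>"
proof -
  assume a: "\<sigma> \<in> signed_perms n" "\<rho> \<in> signed_perms n" "\<sigma> \<noteq> \<rho>"
  obtain x where x: "set x \<subseteq> {0..<n}" "\<sigma> = wd x" using generation[OF a(1)] by blast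
  obtain b where b: "set b \<subseteq> {0..<n}" "\<rho> = wd b" using generation[OF a(2)] by blast
  let ?P = "\<lambda>k. \<exists>ws. length ws = k \<and> set ws \<subseteq> {0..<n} \<and> inv \<rho> \<circ> \<sigma> = wd ws"
  have "inv \<rho> \<circ> \<sigma> = wd (rev b @ x)" using x b by (simp add: inv_wd wd_append)
  then have "?P (length (rev b @ x))" using x b by (intro exI[of _ "rev b @ x"]) auto
  then have P: "?P (Least ?P)" by (rule LeastI)
  have "Least ?P \<noteq> 0"
  proof
    assume "Least ?P = 0"
    then have "inv \<rho> \<circ> \<sigma> = id" using P by auto
    then have "wd b \<circ> (inv \<rho> \<circ> \<sigma>) = wd b" by simp
    then have "\<sigma> = \<rho>" using b x by (simp only: inv_wd o_assoc wd_inv id_o)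
    then show False using a by simp
  qed
  then show ?thesis unfolding d_W_def lengthB_alt by simp
qed

definition Ext :: "nat \<Rightarrow> (int \<Rightarrow> int) \<Rightarrow> int \<Rightarrow> int" where
  "Ext n v x = (if 1 \<le> x \<and> x \<le> int n then v x else if - int n \<le> x \<and> x \<le> -1 then - v (-x) else x)"

lemma Ext_pos: "1 \<le> x \<Longrightarrow> x \<le> int n \<Longrightarrow> Ext n v x = v x" by (simp add: Ext_def)

lemma Ext_odd: "Ext n v (-x) = - Ext n v x" by (auto simp: Ext_def)

lemma Ext_sp:
  assumes inj: "inj_on (\<lambda>i. \<bar>v i\<bar>) {1..int n}"
    and rng: "\<forall>i\<in>{1..int n}. 1 \<le> \<bar>v i\<bar> \<and> \<bar>v i\<bar> \<le> int n"
  shows "Ext n v \<in> signed_perms n"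
proof -
  let ?E = "Ext n v"
  have absE: "\<bar>?E x\<bar> = \<bar>v \<bar>x\<bar>\<bar>" if "x \<in> signedset n" for x
    using that by (auto simp: Ext_def signedset_def)
  have inS: "?E x \<in> signedset n" if "x \<in> signedset n" for x
  proof -
    have "\<bar>x\<bar> \<in> {1..int n}" using that by (auto simp: signedset_def)
    then show ?thesis using rng absE[OF that] by (auto simp: signedset_def)
  qed
  have injE: "inj_on ?E (signedset n)"
  proof (rule inj_onI)
    fix x y assume x: "x \<in> signedset n" and y: "y \<in> signedset n" and e: "?E x = ?E y"
    have ax: "\<bar>x\<bar> \<in> {1..int n}" "\<bar>y\<bar> \<in> {1..int n}" using x y by (auto simp: signedset_def)
    have "\<bar>v \<bar>x\<bar>\<bar> = \<bar>v \<bar>y\<bar>\<bar>" using absE[OF x] absE[OF y] e by simp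
    then have "\<bar>x\<bar> = \<bar>y\<bar>" using inj ax by (auto dest: inj_onD)
    then have "x = y \<or> y = -x" by arith
    then show "x = y"
    proof
      assume "y = -x"
      then have "?E x = - ?E x" using e Ext_odd by metis
      then have "?E x = 0" by simp
      then show "x = y" using inS[OF x] by (simp add: signedset_def)
    qed
  qed
  have finA: "finite (signedset n)"
    by (rule finite_subset[of _ "{- int n..int n}"]) (auto simp: signedset_def)
  have "?E ` signedset n = signedset n"
    by (rule endo_inj_surj[OF finA _ injE]) (use inS in auto)
  then have "bij_betw ?E (signedset n) (signedset n)" using injE by (simp add: bij_betw_def)
  moreover have "\<forall>i. i \<notin> signedset n \<longrightarrow> ?E i = i" by (auto simp: Ext_def signedset_def)
  ultimately show ?thesis using Ext_odd by (simp add: signed_perms_def)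
qed

lemma peak_eq:
  assumes s: "\<sigma> \<in> signed_perms n" and t: "\<tau> \<in> signed_perms n"
    and adj: "\<And>i. 1 \<le> i \<Longrightarrow> i < int n \<Longrightarrow> (\<sigma> i < \<sigma> (i+1) \<longleftrightarrow> \<tau> i < \<tau> (i+1))"
  shows "peak_set n \<sigma> = peak_set n \<tau>"
proof -
  have gt: "f i > f (i+1) \<longleftrightarrow> \<not> f i < f (i+1)" if "f \<in> signed_perms n" "1 \<le> i" "i < int n" for f i
  proof -
    have "f i \<noteq> f (i+1)" by (rule sp_neq[OF that(1)]) (use that in \<open>auto simp: signedset_def\<close>)
    then show ?thesis by auto
  qed
  have "i \<in> peak_set n \<sigma> \<longleftrightarrow> i \<in> peak_set n \<tau>" for i
  proof (cases "2 \<le> i \<and> i \<le> int n - 1")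
    case True
    have a1: "\<sigma> (i-1) < \<sigma> i \<longleftrightarrow> \<tau> (i-1) < \<tau> i" using adj[of "i-1"] True by simp
    have a2: "\<sigma> i > \<sigma> (i+1) \<longleftrightarrow> \<tau> i > \<tau> (i+1)"
      using adj[of i] True gt[OF s, of i] gt[OF t, of i] by simp
    show ?thesis using a1 a2 by (simp add: peak_set_def)
  next
    case False then show ?thesis by (auto simp: peak_set_def)
  qed
  then show ?thesis by blast
qed

lemma rank_mono:
  assumes "finite A" "i \<in> A" "j \<in> A" "g i < (g j :: int)"
  shows "card {k\<in>A. g k < g i} < card {k\<in>A. g k < g j}"
proof (rule psubset_card_mono)
  show "finite {k\<in>A. g k < g j}" using assms by auto
  show "{k\<in>A. g k < g i} \<subset> {k\<in>A. g k < g j}" using assms by auto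
qed

lemma rank_less:
  assumes "finite A" "i \<in> A"
  shows "card {k\<in>A. g k < (g i :: int)} < card A"
  by (rule psubset_card_mono) (use assms in auto)

lemma constr:
  fixes \<sigma>0 :: "int \<Rightarrow> int" and f :: "nat \<Rightarrow> int" and c \<epsilon> :: int
  assumes s0: "\<sigma>0 \<in> signed_perms n" and n2: "2 \<le> n"
    and eps: "\<epsilon> = (if \<sigma>0 1 < \<sigma>0 2 then 1 else -1)"
    and r: "r = (\<lambda>i. card {j\<in>{2..int n}. \<epsilon> * \<sigma>0 j < \<epsilon> * \<sigma>0 i})"
    and frng: "\<And>k. k < n - 1 \<Longrightarrow> 1 \<le> f k \<and> f k \<le> int n"
    and fmono: "\<And>k l. k < l \<Longrightarrow> l < n - 1 \<Longrightarrow> f k < f l"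
    and crng: "1 \<le> \<bar>c\<bar>" "\<bar>c\<bar> \<le> int n"
    and cne: "\<And>k. k < n - 1 \<Longrightarrow> \<bar>c\<bar> \<noteq> f k"
    and cless: "\<And>k. k < n - 1 \<Longrightarrow> c < f k"
  shows "Ext n (\<lambda>i. if i = 1 then \<epsilon> * c else \<epsilon> * f (r i)) \<in> signed_perms n"
    "peak_set n (Ext n (\<lambda>i. if i = 1 then \<epsilon> * c else \<epsilon> * f (r i))) = peak_set n \<sigma>0"
proof -
  let ?A = "{2..int n}"
  let ?g = "\<lambda>j. \<epsilon> * \<sigma>0 j"
  let ?v = "\<lambda>i. if i = 1 then \<epsilon> * c else \<epsilon> * f (r i)"
  have cardA: "card ?A = n - 1" using n2 by simp
  have epsabs: "\<bar>\<epsilon>\<bar> = 1" using eps by auto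
  have rlt: "r i < n - 1" if "i \<in> ?A" for i
    unfolding r using rank_less[of ?A i ?g] that cardA by simp
  have ginj: "?g i \<noteq> ?g j" if "i \<in> ?A" "j \<in> ?A" "i \<noteq> j" for i j
  proof -
    have "\<sigma>0 i \<noteq> \<sigma>0 j" by (rule sp_neq[OF s0]) (use that in \<open>auto simp: signedset_def\<close>)
    then show ?thesis using epsabs by auto
  qed
  have riff: "?g i < ?g j \<longleftrightarrow> r i < r j" if "i \<in> ?A" "j \<in> ?A" for i j
  proof
    assume "?g i < ?g j" then show "r i < r j" unfolding r using rank_mono[of ?A i j ?g] that by simp
  next
    assume h: "r i < r j"
    show "?g i < ?g j"
    proof (rule ccontr)
      assume "\<not> ?g i < ?g j"
      moreover have "i \<noteq> j" using h by auto
      ultimately have "?g j < ?g i" using ginj[OF that] by linarith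
      then have "r j < r i" unfolding r using rank_mono[of ?A j i ?g] that by simp
      then show False using h by simp
    qed
  qed
  have fiff: "f k < f l \<longleftrightarrow> k < l" if "k < n - 1" "l < n - 1" for k l
    using fmono that by (metis linorder_neqE_nat order_less_asym order_less_irrefl)
  have vabs: "\<bar>?v i\<bar> = (if i = 1 then \<bar>c\<bar> else f (r i))" if "i \<in> {1..int n}" for i
  proof (cases "i = 1")
    case False
    then have "i \<in> ?A" using that by auto
    then have "f (r i) \<ge> 1" using frng rlt by blast
    then show ?thesis using False epsabs by (simp add: abs_mult)
  qed (simp add: abs_mult epsabs)
  have sp: "Ext n ?v \<in> signed_perms n"
  proof (rule Ext_sp)
    show "inj_on (\<lambda>i. \<bar>?v i\<bar>) {1..int n}"
    proof (rule inj_onI)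
      fix i j assume i: "i \<in> {1..int n}" and j: "j \<in> {1..int n}" and e: "\<bar>?v i\<bar> = \<bar>?v j\<bar>"
      show "i = j"
      proof (cases "i = 1"; cases "j = 1")
        assume "i = 1" "j \<noteq> 1"
        then have "j \<in> ?A" using j by auto
        then show ?thesis using e vabs[OF i] vabs[OF j] cne rlt \<open>i = 1\<close> \<open>j \<noteq> 1\<close> by auto
      next
        assume "i \<noteq> 1" "j = 1"
        then have "i \<in> ?A" using i by auto
        then show ?thesis using e vabs[OF i] vabs[OF j] cne rlt \<open>i \<noteq> 1\<close> \<open>j = 1\<close> by fastforce
      next
        assume "i \<noteq> 1" "j \<noteq> 1"
        then have ij: "i \<in> ?A" "j \<in> ?A" using i j by auto
        then have "f (r i) = f (r j)" using e vabs[OF i] vabs[OF j] \<open>i \<noteq> 1\<close> \<open>j \<noteq> 1\<close> by simp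
        then have "r i = r j" using fiff[OF rlt[OF ij(1)] rlt[OF ij(2)]] fiff[OF rlt[OF ij(2)] rlt[OF ij(1)]]
          by (metis linorder_neqE_nat order_less_irrefl)
        show ?thesis
        proof (rule ccontr)
          assume "i \<noteq> j"
          then have "?g i < ?g j \<or> ?g j < ?g i" using ginj[OF ij] by linarith
          then show False using riff[OF ij] riff[OF ij(2,1)] \<open>r i = r j\<close> by auto
        qed
      qed simp
    qed
    show "\<forall>i\<in>{1..int n}. 1 \<le> \<bar>?v i\<bar> \<and> \<bar>?v i\<bar> \<le> int n"
    proof
      fix i assume i: "i \<in> {1..int n}"
      show "1 \<le> \<bar>?v i\<bar> \<and> \<bar>?v i\<bar> \<le> int n"
      proof (cases "i = 1")
        case False then have "i \<in> ?A" using i by auto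
        then show ?thesis using vabs[OF i] False frng rlt by auto
      qed (use vabs[OF i] crng in auto)
    qed
  qed
  show "Ext n ?v \<in> signed_perms n" by (rule sp)
  have ordA: "\<sigma>0 i < \<sigma>0 j \<longleftrightarrow> ?v i < ?v j" if "i \<in> ?A" "j \<in> ?A" for i j
  proof -
    have ne: "i \<noteq> 1" "j \<noteq> 1" using that by auto
    have h1: "?g i < ?g j \<longleftrightarrow> f (r i) < f (r j)" using riff[OF that] fiff[OF rlt[OF that(1)] rlt[OF that(2)]] by simp
    have h2: "?g j < ?g i \<longleftrightarrow> f (r j) < f (r i)" using riff[OF that(2,1)] fiff[OF rlt[OF that(2)] rlt[OF that(1)]] by simp
    show ?thesis
    proof (cases "i = j")
      case False
      then have "\<sigma>0 i \<noteq> \<sigma>0 j" by (intro sp_neq[OF s0]) (use that in \<open>auto simp: signedset_def\<close>)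
      then show ?thesis using h1 h2 eps ne by (auto split: if_splits)
    qed simp
  qed
  show "peak_set n (Ext n ?v) = peak_set n \<sigma>0"
  proof (rule peak_eq[OF sp s0])
    fix i assume i: "1 \<le> i" "i < int n"
    have e1: "Ext n ?v i = ?v i" "Ext n ?v (i+1) = ?v (i+1)" using i by (simp_all add: Ext_pos)
    show "(Ext n ?v i < Ext n ?v (i + 1)) = (\<sigma>0 i < \<sigma>0 (i + 1))"
    proof (cases "i = 1")
      case True
      have "2 \<in> ?A" using n2 by auto
      then have "c < f (r 2)" using cless rlt by blast
      then show ?thesis unfolding e1 using True eps by auto
    next
      case False
      then have "i \<in> ?A" "i + 1 \<in> ?A" using i by auto
      then show ?thesis unfolding e1 using ordA by blast
    qed
  qed
qed

lemma min_lemma: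
  fixes d :: "(int \<Rightarrow> int) \<Rightarrow> (int \<Rightarrow> int) \<Rightarrow> 'a::linorder"
  assumes lb: "\<And>\<sigma> \<rho>. \<sigma> \<in> PB S n \<Longrightarrow> \<rho> \<in> PB S n \<Longrightarrow> \<sigma> \<noteq> \<rho> \<Longrightarrow> a \<le> d \<sigma> \<rho>"
    and w: "\<sigma>1 \<in> PB S n" "\<rho>1 \<in> PB S n" "\<sigma>1 \<noteq> \<rho>1" "d \<sigma>1 \<rho>1 = a"
  shows "Min {d \<sigma> \<rho> | \<sigma> \<rho>. \<sigma> \<in> PB S n \<and> \<rho> \<in> PB S n \<and> \<sigma> \<noteq> \<rho>} = a"
proof (rule Min_eqI)
  have "{d \<sigma> \<rho> | \<sigma> \<rho>. \<sigma> \<in> PB S n \<and> \<rho> \<in> PB S n \<and> \<sigma> \<noteq> \<rho>} \<subseteq> (\<lambda>(\<sigma>, \<rho>). d \<sigma> \<rho>) ` (signed_perms n \<times> signed_perms n)"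
    by (auto simp: PB_def)
  then show "finite {d \<sigma> \<rho> | \<sigma> \<rho>. \<sigma> \<in> PB S n \<and> \<rho> \<in> PB S n \<and> \<sigma> \<noteq> \<rho>}"
    by (rule finite_subset) (simp add: fin_sp)
  show "\<And>y. y \<in> {d \<sigma> \<rho> | \<sigma> \<rho>. \<sigma> \<in> PB S n \<and> \<rho> \<in> PB S n \<and> \<sigma> \<noteq> \<rho>} \<Longrightarrow> a \<le> y"
    using lb by blast
  show "a \<in> {d \<sigma> \<rho> | \<sigma> \<rho>. \<sigma> \<in> PB S n \<and> \<rho> \<in> PB S n \<and> \<sigma> \<noteq> \<rho>}"
    using w by (metis (mono_tags, lifting) mem_Collect_eq)
qed

lemma lengthB_sB0: "0 < n \<Longrightarrow> lengthB n (sB 0) = 1"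
  unfolding lengthB_alt
proof (rule Least_equality)
  assume "0 < n"
  then show "\<exists>ws. length ws = 1 \<and> set ws \<subseteq> {0..<n} \<and> sB 0 = wd ws"
    by (intro exI[of _ "[0]"]) auto
next
  fix k assume "\<exists>ws. length ws = k \<and> set ws \<subseteq> {0..<n} \<and> sB 0 = wd ws"
  then obtain ws where ws: "length ws = k" "sB 0 = wd ws" by blast
  show "1 \<le> k"
  proof (rule ccontr)
    assume "\<not> 1 \<le> k"
    then have "ws = []" using ws(1) by (cases ws) auto
    then have "sB 0 = id" using ws by simp
    then have "sB 0 1 = 1" by simp
    then show False by (simp add: sB_def)
  qed
qed

theorem theorem4p6:
  fixes n :: nat and S :: "int set"
  assumes "n \<ge> 2" and "admissible_peak_set S n"
  shows "Min {d_H n \<sigma> \<rho> | \<sigma> \<rho>. \<sigma> \<in> PB S n \<and> \<rho> \<in> PB S n \<and> \<sigma> \<noteq> \<rho>} = 1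
       \<and> Min {d_l n \<sigma> \<rho> | \<sigma> \<rho>. \<sigma> \<in> PB S n \<and> \<rho> \<in> PB S n \<and> \<sigma> \<noteq> \<rho>} = 1
       \<and> Min {d_W n \<sigma> \<rho> | \<sigma> \<rho>. \<sigma> \<in> PB S n \<and> \<rho> \<in> PB S n \<and> \<sigma> \<noteq> \<rho>} = 1"
proof -
  note n2 = assms(1)
  obtain \<sigma>0 where "\<sigma>0 \<in> PB S n" using assms(2) by (auto simp: admissible_peak_set_def)
  then have s0: "\<sigma>0 \<in> signed_perms n" and S: "S = peak_set n \<sigma>0" by (auto simp: PB_def)
  define \<epsilon> :: int where "\<epsilon> = (if \<sigma>0 1 < \<sigma>0 2 then 1 else -1)"
  define r where "r = (\<lambda>i. card {j\<in>{2..int n}. \<epsilon> * \<sigma>0 j < \<epsilon> * \<sigma>0 i})"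
  have eps: "\<epsilon> = 1 \<or> \<epsilon> = -1" by (simp add: \<epsilon>_def)
  define v1 where "v1 = (\<lambda>i. if i = 1 then \<epsilon> * 1 else \<epsilon> * (int (r i) + 2))"
  define v2 where "v2 = (\<lambda>i. if i = 1 then \<epsilon> * (-1) else \<epsilon> * (int (r i) + 2))"
  define v3 where "v3 = (\<lambda>i. if i = 1 then \<epsilon> * (- int n) else \<epsilon> * (int (r i) + 1))"
  define v4 where "v4 = (\<lambda>i. if i = 1 then \<epsilon> * (- (int n - 1)) else \<epsilon> * (if r i = n - 2 then int n else int (r i) + 1))"
  note C = constr[OF s0 n2 \<epsilon>_def r_def]
  have "Ext n v1 \<in> signed_perms n \<and> peak_set n (Ext n v1) = S" unfolding v1_def S
    by (intro conjI C[where f="\<lambda>k. int k + 2" and c="1"]) (use n2 in auto)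
  then have t1: "Ext n v1 \<in> PB S n" by (simp add: PB_def)
  have "Ext n v2 \<in> signed_perms n \<and> peak_set n (Ext n v2) = S" unfolding v2_def S
    by (intro conjI C[where f="\<lambda>k. int k + 2" and c="-1"]) (use n2 in auto)
  then have t2: "Ext n v2 \<in> PB S n" by (simp add: PB_def)
  have "Ext n v3 \<in> signed_perms n \<and> peak_set n (Ext n v3) = S" unfolding v3_def S
    by (intro conjI C[where f="\<lambda>k. int k + 1" and c="- int n"]) (use n2 in auto)
  then have t3: "Ext n v3 \<in> PB S n" by (simp add: PB_def)
  have "Ext n v4 \<in> signed_perms n \<and> peak_set n (Ext n v4) = S" unfolding v4_def S
    by (intro conjI C[where f="\<lambda>k. if k = n - 2 then int n else int k + 1" and c="- (int n - 1)"]) (use n2 in auto)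
  then have t4: "Ext n v4 \<in> PB S n" by (simp add: PB_def)
  have sp1: "Ext n v1 \<in> signed_perms n" using t1 by (simp add: PB_def)
  have ne12: "Ext n v2 \<noteq> Ext n v1"
  proof
    assume "Ext n v2 = Ext n v1"
    then have "Ext n v2 1 = Ext n v1 1" by simp
    then show False using n2 eps by (auto simp: Ext_def v1_def v2_def)
  qed
  have ne34: "Ext n v3 \<noteq> Ext n v4"
  proof
    assume "Ext n v3 = Ext n v4"
    then have "Ext n v3 1 = Ext n v4 1" by simp
    then show False using n2 eps by (auto simp: Ext_def v3_def v4_def)
  qed
  have dH: "d_H n (Ext n v2) (Ext n v1) = 1"
  proof -
    have "{i \<in> {1..int n}. Ext n v2 i \<noteq> Ext n v1 i} = {1}"
      using n2 eps by (auto simp: Ext_def v1_def v2_def)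
    then show ?thesis by (simp add: d_H_def)
  qed
  have comp: "Ext n v2 = Ext n v1 \<circ> sB 0"
  proof
    fix x show "Ext n v2 x = (Ext n v1 \<circ> sB 0) x"
      using n2 by (auto simp: Ext_def v1_def v2_def sB_def)
  qed
  have dW: "d_W n (Ext n v2) (Ext n v1) = 1"
  proof -
    obtain b where b: "Ext n v1 = wd b" using generation[OF sp1] by blast
    have "inv (Ext n v1) \<circ> Ext n v2 = sB 0"
      unfolding comp b by (simp only: inv_wd o_assoc wd_rev_inv id_o)
    then show ?thesis using n2 by (simp add: d_W_def lengthB_sB0)
  qed
  have dl: "d_l n (Ext n v3) (Ext n v4) = 1"
    unfolding d_l_def
  proof (rule Max_eqI)
    show "finite ((\<lambda>i. \<bar>Ext n v3 i - Ext n v4 i\<bar>) ` {1..int n})" by simp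
  next
    fix y assume "y \<in> (\<lambda>i. \<bar>Ext n v3 i - Ext n v4 i\<bar>) ` {1..int n}"
    then obtain i where i: "i \<in> {1..int n}" "y = \<bar>Ext n v3 i - Ext n v4 i\<bar>" by blast
    have nn: "int (n - 2) = int n - 2" using n2 by simp
    have "y = \<bar>v3 i - v4 i\<bar>" using i by (simp add: Ext_pos)
    also have "\<dots> \<le> 1"
    proof (cases "i = 1")
      case True then show ?thesis using eps by (auto simp: v3_def v4_def)
    next
      case False
      show ?thesis
      proof (cases "r i = n - 2")
        case True
        then have "v3 i - v4 i = \<epsilon> * (int (n - 2) + 1 - int n)" using False
          by (simp add: v3_def v4_def algebra_simps)
        also have "\<dots> = - \<epsilon>" using nn by simp
        finally show ?thesis using eps by auto
      next
        case F2: False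
        then show ?thesis using False by (simp add: v3_def v4_def)
      qed
    qed
    finally show "y \<le> 1" .
  next
    have "\<bar>Ext n v3 1 - Ext n v4 1\<bar> = \<bar>v3 1 - v4 1\<bar>" using n2 by (simp add: Ext_pos)
    also have "\<dots> = 1" using eps by (auto simp: v3_def v4_def)
    finally have "\<bar>Ext n v3 1 - Ext n v4 1\<bar> = 1" .
    then show "1 \<in> (\<lambda>i. \<bar>Ext n v3 i - Ext n v4 i\<bar>) ` {1..int n}"
      using n2 by (intro image_eqI[of _ _ 1]) auto
  qed
  have "Min {d_H n \<sigma> \<rho> | \<sigma> \<rho>. \<sigma> \<in> PB S n \<and> \<rho> \<in> PB S n \<and> \<sigma> \<noteq> \<rho>} = 1"
  proof -
    have lb: "\<And>\<sigma> \<rho>. \<sigma> \<in> PB S n \<Longrightarrow> \<rho> \<in> PB S n \<Longrightarrow> \<sigma> \<noteq> \<rho> \<Longrightarrow> 1 \<le> d_H n \<sigma> \<rho>"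
      unfolding PB_def using dH_ge by blast
    show ?thesis using min_lemma[where d="d_H n", OF lb t2 t1 ne12 dH] .
  qed
  moreover have "Min {d_l n \<sigma> \<rho> | \<sigma> \<rho>. \<sigma> \<in> PB S n \<and> \<rho> \<in> PB S n \<and> \<sigma> \<noteq> \<rho>} = 1"
  proof -
    have lb: "\<And>\<sigma> \<rho>. \<sigma> \<in> PB S n \<Longrightarrow> \<rho> \<in> PB S n \<Longrightarrow> \<sigma> \<noteq> \<rho> \<Longrightarrow> 1 \<le> d_l n \<sigma> \<rho>"
      unfolding PB_def using dl_ge by blast
    show ?thesis using min_lemma[where d="d_l n", OF lb t3 t4 ne34 dl] .
  qed
  moreover have "Min {d_W n \<sigma> \<rho> | \<sigma> \<rho>. \<sigma> \<in> PB S n \<and> \<rho> \<in> PB S n \<and> \<sigma> \<noteq> \<rho>} = 1"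
  proof -
    have lb: "\<And>\<sigma> \<rho>. \<sigma> \<in> PB S n \<Longrightarrow> \<rho> \<in> PB S n \<Longrightarrow> \<sigma> \<noteq> \<rho> \<Longrightarrow> 1 \<le> d_W n \<sigma> \<rho>"
      unfolding PB_def using dW_ge by blast
    show ?thesis using min_lemma[where d="d_W n", OF lb t2 t1 ne12 dW] .
  qed
  ultimately show ?thesis by blast
qed

end
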